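(* Let $\Gamma$ be a stable group with finite presentation $\langle X\mid R\rangle$, corresponding to the epimorphism $\pi:\mathbb{F}\twoheadrightarrow\Gamma$ from the free group $\mathbb{F}$ on $X$. If $\pi$ is not an isomorphism, then for all $x\ge1$, $$\frac{1}{\|R\|}F_\Gamma^\pi(x)\le H_{\langle X\mid R\rangle}(x)\le F_\Gamma^\pi(x)\,D_{\langle X\mid R\rangle}(F_\Gamma^\pi(x)).$$ If $\pi$ is an isomorphism, then $H_{\langle X\mid R\rangle}(x)=0$ for all $x\ge1$.
   Context: $\ker\pi$ is the normal closure of the finite set $R$. For finite $\Omega$, $d_\Omega(\sigma,\tau)=|\{\omega:\sigma(\omega)\ne\tau(\omega)\}|/|\Omega|$. For $E\subseteq\mathbb{F}$, a homomorphism $\phi:\mathbb{F}\to\mathrm{Sym}(\Omega)$ is a solution for $E$ if $E\subseteq\ker\phi$, and a $(\delta,E)$-almost-solution if $d_\Omega(\phi(r),\mathrm{id})<\delta$ for all $r\in E$; $\rho,\phi$ are $\epsilon$-close if $d_\Omega(\rho(x),\phi(x))<\epsilon$ for all $x\in X$. $\|E\|=\sum_{r\in E}|r|$ (word length in $X$). $F_\Gamma^\pi(x)$ is the infimum of $\|E\|/\delta$ over pairs with $\delta\in(0,1]$, $E\subseteq\ker\pi$ finite, such that every $(\delta,E)$-almost-solution is $x^{-1}$-close to a solution for $\ker\pi$; $\Gamma$ stable means such pairs exist for all $x$. $H_{\langle X\mid R\rangle}(x)$ is the infimum of $1/\delta$ over all $\delta>0$ such that every $(\delta,R)$-almost-solution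 is $x^{-1}$-close to a solution for $\ker\pi$. The Dehn function: $D_{\langle X\mid R\rangle}(n)$ is the maximum, over $w\in\ker\pi$ with $|w|\le n$, of the least $m$ such that $w=\prod_{i=1}^m u_ir_iu_i^{-1}$ with $u_i\in\mathbb{F}$, $r_i\in R^{\pm1}$; it is extended to $[1,\infty)$ by $D(x)=D(\lfloor x\rfloor)$. *)

theory Defs
  imports "HOL-Analysis.Analysis" "HOL-Combinatorics.Permutations"
begin

text \<open>Words over the generating set X: lists of signed letters (x, True) = x, (x, False) = x^-1.\<close>

type_synonym 'a word = "('a \<times> bool) list"

definition words :: "'a set \<Rightarrow> 'a word set" where
  "words X = {w. \<forall>l\<in>set w. fst l \<in> X}"

definition letter_inv :: "'a \<times> bool \<Rightarrow> 'a \<times> bool" where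
  "letter_inv l = (fst l, \<not> snd l)"

definition word_inv :: "'a word \<Rightarrow> 'a word" where
  "word_inv w = rev (map letter_inv w)"

definition reduced :: "'a word \<Rightarrow> bool" where
  "reduced w = (\<forall>i. Suc i < length w \<longrightarrow> w ! Suc i \<noteq> letter_inv (w ! i))"

definition free_step :: "'a word \<Rightarrow> 'a word \<Rightarrow> bool" where
  "free_step w w' = (\<exists>a b l. w = a @ [l, letter_inv l] @ b \<and> w' = a @ b)"

definition free_eq :: "'a word \<Rightarrow> 'a word \<Rightarrow> bool" where
  "free_eq = (symclp free_step)\<^sup>*\<^sup>*"

definition conj_prod :: "('a word \<times> 'a word \<times> bool) list \<Rightarrow> 'a word" where
  "conj_prod ps = concat (map (\<lambda>(u, r, e). u @ (if e then r else word_inv r) @ word_inv u) ps)"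

definition valid_pieces :: "'a set \<Rightarrow> 'a word set \<Rightarrow> ('a word \<times> 'a word \<times> bool) list \<Rightarrow> bool" where
  "valid_pieces X R ps = (\<forall>(u, r, e)\<in>set ps. u \<in> words X \<and> r \<in> R)"

definition kernel :: "'a set \<Rightarrow> 'a word set \<Rightarrow> 'a word set" where
  "kernel X R = {w \<in> words X. \<exists>ps. valid_pieces X R ps \<and> free_eq w (conj_prod ps)}"

definition pi_iso :: "'a set \<Rightarrow> 'a word set \<Rightarrow> bool" where
  "pi_iso X R = (\<forall>w\<in>kernel X R. free_eq w [])"

text \<open>A homomorphism F -> Sym(Omega) is given by the images of the generators.\<close>
definition is_hom :: "'a set \<Rightarrow> nat set \<Rightarrow> ('a \<Rightarrow> nat \<Rightarrow> nat) \<Rightarrow> bool" where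
  "is_hom X \<Omega> \<sigma> = (\<forall>x\<in>X. \<sigma> x permutes \<Omega>)"

definition eval_letter :: "('a \<Rightarrow> nat \<Rightarrow> nat) \<Rightarrow> 'a \<times> bool \<Rightarrow> nat \<Rightarrow> nat" where
  "eval_letter \<sigma> l = (if snd l then \<sigma> (fst l) else inv (\<sigma> (fst l)))"

definition eval_word :: "('a \<Rightarrow> nat \<Rightarrow> nat) \<Rightarrow> 'a word \<Rightarrow> nat \<Rightarrow> nat" where
  "eval_word \<sigma> w = foldr (\<lambda>l f. eval_letter \<sigma> l \<circ> f) w id"

definition dOmega :: "nat set \<Rightarrow> (nat \<Rightarrow> nat) \<Rightarrow> (nat \<Rightarrow> nat) \<Rightarrow> real" where
  "dOmega \<Omega> s t = real (card {\<omega>\<in>\<Omega>. s \<omega> \<noteq> t \<omega>}) / real (card \<Omega>)"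

definition is_solution :: "nat set \<Rightarrow> 'a word set \<Rightarrow> ('a \<Rightarrow> nat \<Rightarrow> nat) \<Rightarrow> bool" where
  "is_solution \<Omega> E \<phi> = (\<forall>r\<in>E. \<forall>\<omega>\<in>\<Omega>. eval_word \<phi> r \<omega> = \<omega>)"

definition almost_solution :: "nat set \<Rightarrow> real \<Rightarrow> 'a word set \<Rightarrow> ('a \<Rightarrow> nat \<Rightarrow> nat) \<Rightarrow> bool" where
  "almost_solution \<Omega> \<delta> E \<phi> = (\<forall>r\<in>E. dOmega \<Omega> (eval_word \<phi> r) id < \<delta>)"

definition eps_close :: "'a set \<Rightarrow> nat set \<Rightarrow> real \<Rightarrow> ('a \<Rightarrow> nat \<Rightarrow> nat) \<Rightarrow> ('a \<Rightarrow> nat \<Rightarrow> nat) \<Rightarrow> bool" where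
  "eps_close X \<Omega> \<epsilon> \<rho> \<phi> = (\<forall>x\<in>X. dOmega \<Omega> (\<rho> x) (\<phi> x) < \<epsilon>)"

definition good_pair :: "'a set \<Rightarrow> 'a word set \<Rightarrow> real \<Rightarrow> 'a word set \<Rightarrow> real \<Rightarrow> bool" where
  "good_pair X R \<delta> E \<epsilon> =
     (\<forall>\<Omega>::nat set. finite \<Omega> \<longrightarrow> (\<forall>\<rho>. is_hom X \<Omega> \<rho> \<longrightarrow> almost_solution \<Omega> \<delta> E \<rho> \<longrightarrow>
        (\<exists>\<phi>. is_hom X \<Omega> \<phi> \<and> is_solution \<Omega> (kernel X R) \<phi> \<and> eps_close X \<Omega> \<epsilon> \<rho> \<phi>)))"

definition set_norm :: "'a word set \<Rightarrow> real" where
  "set_norm E = real (\<Sum>r\<in>E. length r)"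

definition admissible_pairs :: "'a set \<Rightarrow> 'a word set \<Rightarrow> real \<Rightarrow> (real \<times> 'a word set) set" where
  "admissible_pairs X R x = {(\<delta>, E). 0 < \<delta> \<and> \<delta> \<le> 1 \<and> finite E \<and> E \<subseteq> kernel X R \<and>
       (\<forall>r\<in>E. reduced r) \<and> good_pair X R \<delta> E (1 / x)}"

definition F_fun :: "'a set \<Rightarrow> 'a word set \<Rightarrow> real \<Rightarrow> real" where
  "F_fun X R x = Inf ((\<lambda>(\<delta>, E). set_norm E / \<delta>) ` admissible_pairs X R x)"

definition stable :: "'a set \<Rightarrow> 'a word set \<Rightarrow> bool" where
  "stable X R = (\<forall>x::real. x > 0 \<longrightarrow> admissible_pairs X R x \<noteq> {})"

definition H_fun :: "'a set \<Rightarrow> 'a word set \<Rightarrow> real \<Rightarrow> real" where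
  "H_fun X R x = Inf {1 / \<delta> | \<delta>. 0 < \<delta> \<and> good_pair X R \<delta> R (1 / x)}"

definition area :: "'a set \<Rightarrow> 'a word set \<Rightarrow> 'a word \<Rightarrow> nat" where
  "area X R w = (LEAST m. \<exists>ps. length ps = m \<and> valid_pieces X R ps \<and> free_eq w (conj_prod ps))"

definition dehn_nat :: "'a set \<Rightarrow> 'a word set \<Rightarrow> nat \<Rightarrow> nat" where
  "dehn_nat X R n = Max {area X R w | w. w \<in> kernel X R \<and> reduced w \<and> length w \<le> n}"

definition dehn :: "'a set \<Rightarrow> 'a word set \<Rightarrow> real \<Rightarrow> real" where
  "dehn X R y = real (dehn_nat X R (nat \<lfloor>y\<rfloor>))"

end

theory Submission
  imports Defs
begin

lemma eval_word_Nil[simp]: "eval_word s [] = id"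
  by (simp add: eval_word_def)

lemma eval_word_Cons[simp]: "eval_word s (l # w) = eval_letter s l \<circ> eval_word s w"
  by (simp add: eval_word_def)

lemma eval_word_append[simp]: "eval_word s (a @ b) = eval_word s a \<circ> eval_word s b"
  by (induction a) (auto simp: comp_assoc)

lemma eval_letter_bij: "(\<And>x. bij (s x)) \<Longrightarrow> bij (eval_letter s l)"
  by (auto simp: eval_letter_def bij_imp_bij_inv)

lemma eval_word_bij: "(\<And>x. bij (s x)) \<Longrightarrow> bij (eval_word s w)"
  by (induction w) (auto intro: bij_comp eval_letter_bij)

lemma eval_letter_inv: "(\<And>x. bij (s x)) \<Longrightarrow> eval_letter s (letter_inv l) = inv (eval_letter s l)"
  by (auto simp: eval_letter_def letter_inv_def inv_inv_eq)

lemma eval_word_inv: "(\<And>x. bij (s x)) \<Longrightarrow> eval_word s (word_inv w) = inv (eval_word s w)"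
proof (induction w)
  case Nil
  then show ?case by (simp add: word_inv_def)
next
  case (Cons l w)
  have "word_inv (l # w) = word_inv w @ [letter_inv l]" by (simp add: word_inv_def)
  then have "eval_word s (word_inv (l # w)) = inv (eval_word s w) \<circ> inv (eval_letter s l)"
    using Cons by (simp add: eval_letter_inv)
  also have "\<dots> = inv (eval_letter s l \<circ> eval_word s w)"
    by (simp add: o_inv_distrib eval_word_bij eval_letter_bij Cons.prems)
  finally show ?case by (simp add: o_def)
qed

lemma eval_letter_cancel: assumes "\<And>x. bij (s x)" shows "eval_letter s l \<circ> eval_letter s (letter_inv l) = id"
proof -
  have "surj (eval_letter s l)" using eval_letter_bij[of s l] assms bij_is_surj by blast
  then show ?thesis by (simp add: eval_letter_inv[OF assms] surj_iff)
qed

lemma eval_letter_cancel2: assumes "\<And>x. bij (s x)" shows "eval_letter s l \<circ> (eval_letter s (letter_inv l) \<circ> g) = g"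
proof -
  have "eval_letter s l \<circ> (eval_letter s (letter_inv l) \<circ> g) = (eval_letter s l \<circ> eval_letter s (letter_inv l)) \<circ> g"
    by (simp add: comp_assoc)
  also have "\<dots> = g" by (simp add: eval_letter_cancel[OF assms])
  finally show ?thesis .
qed

lemma free_step_eval: assumes "\<And>x. bij (s x)" "free_step a b" shows "eval_word s a = eval_word s b"
proof -
  obtain p q l where "a = p @ [l, letter_inv l] @ q" "b = p @ q" using assms(2) unfolding free_step_def by blast
  then show ?thesis by (simp add: eval_letter_cancel2[OF assms(1)])
qed

lemma free_eq_eval: assumes "\<And>x. bij (s x)" and "free_eq a b" shows "eval_word s a = eval_word s b"
proof -
  have "(symclp free_step)\<^sup>*\<^sup>* a b" using assms(2) by (simp add: free_eq_def)
  then show ?thesis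
  proof (induction rule: rtranclp_induct)
    case base then show ?case by simp
  next
    case (step y z)
    from step(2) have "free_step y z \<or> free_step z y" by (simp add: symclp_def)
    then have "eval_word s y = eval_word s z"
    proof
      assume "free_step y z" then show ?thesis by (rule free_step_eval[of s y z, OF assms(1)])
    next
      assume "free_step z y" then show ?thesis using free_step_eval[of s z y, OF assms(1)] by simp
    qed
    then show ?case using step(3) by simp
  qed
qed

definition extg :: "'a set \<Rightarrow> ('a \<Rightarrow> nat \<Rightarrow> nat) \<Rightarrow> 'a \<Rightarrow> nat \<Rightarrow> nat" where
  "extg X s = (\<lambda>x. if x \<in> X then s x else id)"

lemma extg_eval: "w \<in> words X \<Longrightarrow> eval_word (extg X s) w = eval_word s w"
  by (induction w) (auto simp: words_def extg_def eval_letter_def)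

lemma extg_permutes: "is_hom X \<Omega> s \<Longrightarrow> extg X s x permutes \<Omega>"
  by (auto simp: is_hom_def extg_def)

lemma extg_bij: "is_hom X \<Omega> s \<Longrightarrow> bij (extg X s x)"
  by (rule permutes_bij[OF extg_permutes])

lemma eval_letter_permutes: "(\<And>x. s x permutes \<Omega>) \<Longrightarrow> eval_letter s l permutes \<Omega>"
  by (auto simp: eval_letter_def permutes_inv)

lemma eval_word_permutes: "(\<And>x. s x permutes \<Omega>) \<Longrightarrow> eval_word s w permutes \<Omega>"
  by (induction w) (auto intro: permutes_compose eval_letter_permutes)

definition cnt :: "nat set \<Rightarrow> (nat \<Rightarrow> nat) \<Rightarrow> nat" where
  "cnt \<Omega> f = card {\<omega>\<in>\<Omega>. f \<omega> \<noteq> \<omega>}"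

lemma dOmega_cnt: "dOmega \<Omega> f id = real (cnt \<Omega> f) / real (card \<Omega>)"
  by (simp add: dOmega_def cnt_def)

lemma cnt_comp: "finite \<Omega> \<Longrightarrow> cnt \<Omega> (f \<circ> g) \<le> cnt \<Omega> f + cnt \<Omega> g"
proof -
  assume fin: "finite \<Omega>"
  have "{\<omega>\<in>\<Omega>. (f \<circ> g) \<omega> \<noteq> \<omega>} \<subseteq> {\<omega>\<in>\<Omega>. f \<omega> \<noteq> \<omega>} \<union> {\<omega>\<in>\<Omega>. g \<omega> \<noteq> \<omega>}" by auto
  then have "cnt \<Omega> (f \<circ> g) \<le> card ({\<omega>\<in>\<Omega>. f \<omega> \<noteq> \<omega>} \<union> {\<omega>\<in>\<Omega>. g \<omega> \<noteq> \<omega>})"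
    unfolding cnt_def using fin by (intro card_mono) auto
  also have "\<dots> \<le> cnt \<Omega> f + cnt \<Omega> g" unfolding cnt_def by (rule card_Un_le)
  finally show ?thesis .
qed

lemma cnt_conj: assumes "finite \<Omega>" "u permutes \<Omega>" shows "cnt \<Omega> (u \<circ> r \<circ> inv u) \<le> cnt \<Omega> r"
proof -
  have "{\<omega>\<in>\<Omega>. (u \<circ> r \<circ> inv u) \<omega> \<noteq> \<omega>} \<subseteq> u ` {\<omega>\<in>\<Omega>. r \<omega> \<noteq> \<omega>}"
  proof
    fix \<omega> assume h: "\<omega> \<in> {\<omega>\<in>\<Omega>. (u \<circ> r \<circ> inv u) \<omega> \<noteq> \<omega>}"
    have e: "u (inv u \<omega>) = \<omega>" using assms(2) permutes_inverses(1) by fastforce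
    have "inv u \<omega> \<in> \<Omega>" using h assms(2) by (simp add: permutes_in_image permutes_inv)
    moreover have "r (inv u \<omega>) \<noteq> inv u \<omega>" using h e by auto
    ultimately show "\<omega> \<in> u ` {\<omega>\<in>\<Omega>. r \<omega> \<noteq> \<omega>}" using e by (metis (mono_tags, lifting) image_eqI mem_Collect_eq)
  qed
  then have "cnt \<Omega> (u \<circ> r \<circ> inv u) \<le> card (u ` {\<omega>\<in>\<Omega>. r \<omega> \<noteq> \<omega>})"
    unfolding cnt_def using assms(1) by (intro card_mono) auto
  also have "\<dots> \<le> cnt \<Omega> r" unfolding cnt_def by (rule card_image_le) (use assms(1) in auto)
  finally show ?thesis .
qed

lemma cnt_inv: assumes "finite \<Omega>" "r permutes \<Omega>" shows "cnt \<Omega> (inv r) \<le> cnt \<Omega> r"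
proof -
  have "{\<omega>\<in>\<Omega>. inv r \<omega> \<noteq> \<omega>} \<subseteq> r ` {\<omega>\<in>\<Omega>. r \<omega> \<noteq> \<omega>}"
  proof
    fix \<omega> assume h: "\<omega> \<in> {\<omega>\<in>\<Omega>. inv r \<omega> \<noteq> \<omega>}"
    have e: "r (inv r \<omega>) = \<omega>" using assms(2) permutes_inverses(1) by fastforce
    have "inv r \<omega> \<in> \<Omega>" using h assms(2) by (simp add: permutes_in_image permutes_inv)
    moreover have "r (inv r \<omega>) \<noteq> inv r \<omega>" using h e by auto
    ultimately show "\<omega> \<in> r ` {\<omega>\<in>\<Omega>. r \<omega> \<noteq> \<omega>}" using e by (metis (mono_tags, lifting) image_eqI mem_Collect_eq)
  qed
  then have "cnt \<Omega> (inv r) \<le> card (r ` {\<omega>\<in>\<Omega>. r \<omega> \<noteq> \<omega>})"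
    unfolding cnt_def using assms(1) by (intro card_mono) auto
  also have "\<dots> \<le> cnt \<Omega> r" unfolding cnt_def by (rule card_image_le) (use assms(1) in auto)
  finally show ?thesis .
qed

lemma cnt_le_card: "finite \<Omega> \<Longrightarrow> cnt \<Omega> f \<le> card \<Omega>"
  unfolding cnt_def by (intro card_mono) auto


lemma dOmega_le1: "finite \<Omega> \<Longrightarrow> dOmega \<Omega> f id \<le> 1"
proof -
  assume fin: "finite \<Omega>"
  have "real (cnt \<Omega> f) \<le> real (card \<Omega>)" using cnt_le_card[OF fin] by simp
  then show ?thesis unfolding dOmega_cnt
    by (cases "card \<Omega> = 0") (auto simp: divide_le_eq_1)
qed

lemma dOmega_nonneg: "0 \<le> dOmega \<Omega> f g"
  by (simp add: dOmega_def)

lemma conj_prod_Cons: "conj_prod ((u, r, e) # ps) = u @ (if e then r else word_inv r) @ word_inv u @ conj_prod ps"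
  by (simp add: conj_prod_def)

lemma conj_prod_Nil[simp]: "conj_prod [] = []"
  by (simp add: conj_prod_def)

lemma conj_prod_cnt:
  assumes fin: "finite \<Omega>" and perm: "\<And>x. s x permutes \<Omega>"
  shows "cnt \<Omega> (eval_word s (conj_prod ps)) \<le> sum_list (map (\<lambda>(u, r, e). cnt \<Omega> (eval_word s r)) ps)"
proof (induction ps)
  case Nil
  then show ?case by (simp add: cnt_def)
next
  case (Cons p ps)
  obtain u r e where p: "p = (u, r, e)" by (cases p) auto
  have bij: "\<And>x. bij (s x)" using perm permutes_bij by blast
  have U: "eval_word s u permutes \<Omega>" using eval_word_permutes[OF perm] .
  have Rp: "eval_word s r permutes \<Omega>" using eval_word_permutes[OF perm] .
  define R' where "R' = eval_word s (if e then r else word_inv r)"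
  have cR: "cnt \<Omega> R' \<le> cnt \<Omega> (eval_word s r)"
    using cnt_inv[OF fin Rp] by (simp add: R'_def eval_word_inv[OF bij])
  have "eval_word s (conj_prod (p # ps)) = (eval_word s u \<circ> R' \<circ> inv (eval_word s u)) \<circ> eval_word s (conj_prod ps)"
    by (simp add: p conj_prod_Cons R'_def eval_word_inv[OF bij] comp_assoc)
  then have "cnt \<Omega> (eval_word s (conj_prod (p # ps))) \<le> cnt \<Omega> (eval_word s u \<circ> R' \<circ> inv (eval_word s u)) + cnt \<Omega> (eval_word s (conj_prod ps))"
    using cnt_comp[OF fin] by simp
  also have "\<dots> \<le> cnt \<Omega> R' + cnt \<Omega> (eval_word s (conj_prod ps))"
    using cnt_conj[OF fin U] by simp
  finally show ?case using cR Cons.IH by (simp add: p)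
qed

lemma sum_list_le_len: "(\<And>p. p \<in> set ps \<Longrightarrow> f p \<le> (c::nat)) \<Longrightarrow> sum_list (map f ps) \<le> length ps * c"
  by (induction ps) force+

lemma conj_prod_dOmega:
  assumes fin: "finite \<Omega>" and perm: "\<And>x. s x permutes \<Omega>" and ne: "ps \<noteq> []"
    and small: "\<And>u r e. (u, r, e) \<in> set ps \<Longrightarrow> dOmega \<Omega> (eval_word s r) id < d"
  shows "dOmega \<Omega> (eval_word s (conj_prod ps)) id < real (length ps) * d"
proof -
  obtain p0 where p0: "p0 \<in> set ps" using ne by (cases ps) auto
  have dpos: "0 < d" using small[of "fst p0" "fst (snd p0)" "snd (snd p0)"] p0 dOmega_nonneg[of \<Omega>]
    by (metis order.strict_trans1 prod.collapse)
  have lpos: "0 < real (length ps)" using ne by simp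
  show ?thesis
  proof (cases "card \<Omega> = 0")
    case True
    then show ?thesis using dpos lpos by (simp add: dOmega_def)
  next
    case False
    define f where "f = (\<lambda>(u::'a word, r::'a word, e::bool). cnt \<Omega> (eval_word s r))"
    define c where "c = Max (f ` set ps)"
    have cin: "c \<in> f ` set ps" unfolding c_def using ne by (intro Max_in) auto
    then obtain u r e where ure: "(u, r, e) \<in> set ps" "c = cnt \<Omega> (eval_word s r)" unfolding f_def by auto
    have "real c / real (card \<Omega>) < d" using small[OF ure(1)] ure(2) by (simp add: dOmega_cnt)
    then have cl: "real c < d * real (card \<Omega>)" using False by (simp add: divide_less_eq)
    have "cnt \<Omega> (eval_word s (conj_prod ps)) \<le> sum_list (map f ps)"
      using conj_prod_cnt[OF fin perm] by (simp add: f_def)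
    also have "\<dots> \<le> length ps * c" by (rule sum_list_le_len) (simp add: c_def)
    finally have "real (cnt \<Omega> (eval_word s (conj_prod ps))) \<le> real (length ps) * real c" by (metis of_nat_le_iff of_nat_mult)
    also have "\<dots> < real (length ps) * (d * real (card \<Omega>))" using cl lpos by simp
    finally show ?thesis using False by (simp add: dOmega_cnt divide_less_eq mult.assoc)
  qed
qed


lemma kernel_words: "w \<in> kernel X R \<Longrightarrow> w \<in> words X"
  by (simp add: kernel_def)

lemma area_spec:
  assumes "w \<in> kernel X R"
  shows "\<exists>ps. length ps = area X R w \<and> valid_pieces X R ps \<and> free_eq w (conj_prod ps)"
proof -
  obtain ps where "valid_pieces X R ps \<and> free_eq w (conj_prod ps)" using assms by (auto simp: kernel_def)
  then have "\<exists>m ps. length ps = m \<and> valid_pieces X R ps \<and> free_eq w (conj_prod ps)" by blast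
  then show ?thesis unfolding area_def by (rule LeastI_ex)
qed

lemma area_Nil: "area X R [] = 0"
proof -
  have "free_eq [] (conj_prod [])" by (simp add: free_eq_def)
  moreover have "valid_pieces X R []" by (simp add: valid_pieces_def)
  ultimately show ?thesis unfolding area_def by (intro Least_eq_0) (rule exI[of _ "[]"], simp)
qed

lemma goodR:
  assumes RX: "R \<subseteq> words X" and gp: "good_pair X R \<delta> E \<epsilon>" and EK: "E \<subseteq> kernel X R"
    and ar: "\<And>r. r \<in> E \<Longrightarrow> area X R r \<le> D" and Dd: "real D * \<delta>' \<le> \<delta>" and dpos: "0 < \<delta>" and d'pos: "0 < \<delta>'"
  shows "good_pair X R \<delta>' R \<epsilon>"
  unfolding good_pair_def
proof (intro allI impI)
  fix \<Omega> :: "nat set" and \<rho>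
  assume fin: "finite \<Omega>" and hom: "is_hom X \<Omega> \<rho>" and asol: "almost_solution \<Omega> \<delta>' R \<rho>"
  define s where "s = extg X \<rho>"
  have perm: "\<And>x. s x permutes \<Omega>" unfolding s_def using extg_permutes[OF hom] .
  have bij: "\<And>x. bij (s x)" unfolding s_def using extg_bij[OF hom] .
  have "almost_solution \<Omega> \<delta> E \<rho>" unfolding almost_solution_def
  proof
    fix r assume rE: "r \<in> E"
    then have rK: "r \<in> kernel X R" using EK by auto
    obtain ps where ps: "length ps = area X R r" "valid_pieces X R ps" "free_eq r (conj_prod ps)"
      using area_spec[OF rK] by blast
    have "eval_word \<rho> r = eval_word s r" unfolding s_def using extg_eval[OF kernel_words[OF rK]] by simp
    also have "\<dots> = eval_word s (conj_prod ps)" using free_eq_eval[OF bij ps(3)] .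
    finally have ev: "eval_word \<rho> r = eval_word s (conj_prod ps)" .
    show "dOmega \<Omega> (eval_word \<rho> r) id < \<delta>"
    proof (cases "ps = []")
      case True
      then show ?thesis using ev dpos by (simp add: dOmega_def)
    next
      case False
      have small: "dOmega \<Omega> (eval_word s r') id < \<delta>'" if "(u, r', e) \<in> set ps" for u r' e
      proof -
        have "r' \<in> R" using ps(2) that unfolding valid_pieces_def by auto
        then have "eval_word s r' = eval_word \<rho> r'" unfolding s_def using RX extg_eval by blast
        then show ?thesis using asol \<open>r' \<in> R\<close> by (simp add: almost_solution_def)
      qed
      have "dOmega \<Omega> (eval_word \<rho> r) id < real (length ps) * \<delta>'"
        using conj_prod_dOmega[OF fin perm False small] ev by simp
      also have "\<dots> \<le> real D * \<delta>'" using ps(1) ar[OF rE] d'pos by simp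
      finally show ?thesis using Dd by simp
    qed
  qed
  then show "\<exists>\<phi>. is_hom X \<Omega> \<phi> \<and> is_solution \<Omega> (kernel X R) \<phi> \<and> eps_close X \<Omega> \<epsilon> \<rho> \<phi>"
    using gp fin hom unfolding good_pair_def by blast
qed

lemma area_le_dehn:
  assumes fX: "finite X" and rK: "r \<in> kernel X R" and red: "reduced r" and len: "length r \<le> n"
  shows "area X R r \<le> dehn_nat X R n"
proof -
  have "{w. set w \<subseteq> X \<times> UNIV \<and> length w \<le> n} \<supseteq> {w. w \<in> kernel X R \<and> reduced w \<and> length w \<le> n}"
    by (auto simp: kernel_def words_def)
  moreover have "finite {w. set w \<subseteq> X \<times> (UNIV::bool set) \<and> length w \<le> n}"
    by (rule finite_lists_length_le) (use fX in simp)
  ultimately have "finite {w. w \<in> kernel X R \<and> reduced w \<and> length w \<le> n}" by (rule finite_subset)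
  then have fin: "finite {area X R w | w. w \<in> kernel X R \<and> reduced w \<and> length w \<le> n}"
    by (simp add: setcompr_eq_image)
  show ?thesis unfolding dehn_nat_def by (rule Max_ge[OF fin]) (use rK red len in blast)
qed

lemma R_kernel: assumes "r \<in> words X" shows "r \<in> kernel X R \<or> r \<notin> R"
proof (cases "r \<in> R")
  case True
  have "conj_prod [([], r, True)] = r" by (simp add: conj_prod_def word_inv_def)
  moreover have "valid_pieces X R [([], r, True)]" using True by (simp add: valid_pieces_def words_def)
  moreover have "free_eq r r" by (simp add: free_eq_def)
  ultimately show ?thesis using assms by (auto simp: kernel_def intro!: exI[of _ "[([], r, True)]"])
qed simp


lemma H_le: assumes "0 < \<delta>" "good_pair X R \<delta> R (1 / x)" shows "H_fun X R x \<le> 1 / \<delta>"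
  unfolding H_fun_def
proof (rule cInf_lower)
  show "1 / \<delta> \<in> {1 / \<delta> | \<delta>. 0 < \<delta> \<and> good_pair X R \<delta> R (1 / x)}" using assms by blast
  show "bdd_below {1 / \<delta> | \<delta>. 0 < \<delta> \<and> good_pair X R \<delta> R (1 / x)}"
    by (rule bdd_belowI[of _ 0]) auto
qed

lemma H_ge: assumes "0 < \<delta>" "good_pair X R \<delta> R (1 / x)"
  and lb: "\<And>\<delta>. 0 < \<delta> \<Longrightarrow> good_pair X R \<delta> R (1 / x) \<Longrightarrow> c \<le> 1 / \<delta>"
  shows "c \<le> H_fun X R x"
  unfolding H_fun_def
  by (rule cInf_greatest) (use assms in auto)

lemma H_nonneg: assumes "0 < \<delta>" "good_pair X R \<delta> R (1 / x)" shows "0 \<le> H_fun X R x"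
  by (rule H_ge[OF assms]) simp

lemma H_zero: assumes "\<And>\<delta>. 0 < \<delta> \<Longrightarrow> good_pair X R \<delta> R (1 / x)" shows "H_fun X R x = 0"
proof (rule antisym)
  show "0 \<le> H_fun X R x" using H_nonneg[of 1 X R x] assms[of 1] by simp
  show "H_fun X R x \<le> 0"
  proof (rule field_le_epsilon)
    fix e :: real assume "0 < e"
    then show "H_fun X R x \<le> 0 + e" using H_le[of "1/e" X R x] assms[of "1/e"] by simp
  qed
qed

lemma F_le: assumes "(\<delta>, E) \<in> admissible_pairs X R x" shows "F_fun X R x \<le> set_norm E / \<delta>"
  unfolding F_fun_def
proof (rule cInf_lower)
  show "set_norm E / \<delta> \<in> (\<lambda>(\<delta>, E). set_norm E / \<delta>) ` admissible_pairs X R x"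
    using assms by force
  show "bdd_below ((\<lambda>(\<delta>, E). set_norm E / \<delta>) ` admissible_pairs X R x)"
    by (rule bdd_belowI[of _ 0]) (auto simp: admissible_pairs_def set_norm_def intro!: divide_nonneg_nonneg sum_nonneg)
qed

lemma F_nonneg: assumes "admissible_pairs X R x \<noteq> {}" shows "0 \<le> F_fun X R x"
  unfolding F_fun_def
  by (rule cInf_greatest) (use assms in \<open>auto simp: admissible_pairs_def set_norm_def intro!: divide_nonneg_nonneg sum_nonneg\<close>)

lemma F_lessD: assumes "admissible_pairs X R x \<noteq> {}" "F_fun X R x < y"
  shows "\<exists>\<delta> E. (\<delta>, E) \<in> admissible_pairs X R x \<and> set_norm E / \<delta> < y"
proof -
  have "\<exists>v\<in>(\<lambda>(\<delta>, E). set_norm E / \<delta>) ` admissible_pairs X R x. v < y"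
    using assms unfolding F_fun_def by (intro cInf_lessD) auto
  then show ?thesis by auto
qed

lemma len_le_norm: "finite E \<Longrightarrow> r \<in> E \<Longrightarrow> real (length r) \<le> set_norm E"
  unfolding set_norm_def by (simp only: of_nat_sum) (intro member_le_sum, auto)


lemma adm_good: assumes "(\<delta>, E) \<in> admissible_pairs X R x"
  shows "0 < \<delta>" "\<delta> \<le> 1" "finite E" "E \<subseteq> kernel X R" "good_pair X R \<delta> E (1 / x)" "\<forall>r\<in>E. reduced r"
  using assms by (auto simp: admissible_pairs_def)

lemma S_nonempty:
  assumes RX: "R \<subseteq> words X" and p: "(\<delta>, E) \<in> admissible_pairs X R x"
  shows "\<exists>\<delta>'>0. good_pair X R \<delta>' R (1 / x)"
proof -
  define D where "D = (\<Sum>r\<in>E. area X R r)"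
  note a = adm_good[OF p]
  have "good_pair X R (\<delta> / (real D + 1)) R (1 / x)"
  proof (rule goodR[OF RX a(5) a(4)])
    show "area X R r \<le> D" if "r \<in> E" for r unfolding D_def using a(3) that by (intro member_le_sum) auto
    show "real D * (\<delta> / (real D + 1)) \<le> \<delta>" using a(1) by (simp add: field_simps)
    show "0 < \<delta>" by (rule a(1))
    show "0 < \<delta> / (real D + 1)" using a(1) by simp
  qed
  moreover have "0 < \<delta> / (real D + 1)" using a(1) by simp
  ultimately show ?thesis by blast
qed

lemma all_good_if_area0:
  assumes RX: "R \<subseteq> words X" and p: "(\<delta>, E) \<in> admissible_pairs X R x"
    and ar: "\<And>r. r \<in> E \<Longrightarrow> area X R r \<le> 0"
  shows "H_fun X R x = 0"
proof (rule H_zero)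
  fix \<delta>' :: real assume "0 < \<delta>'"
  note a = adm_good[OF p]
  show "good_pair X R \<delta>' R (1 / x)"
    by (rule goodR[OF RX a(5) a(4) ar]) (use a(1) \<open>0 < \<delta>'\<close> in auto)
qed

lemma upper:
  assumes fX: "finite X" and RX: "R \<subseteq> words X" and Ane: "admissible_pairs X R x \<noteq> {}"
  shows "H_fun X R x \<le> F_fun X R x * dehn X R (F_fun X R x)"
proof -
  define F where "F = F_fun X R x"
  define n where "n = nat \<lfloor>F\<rfloor>"
  define Dn where "Dn = dehn_nat X R n"
  have F0: "0 \<le> F" unfolding F_def by (rule F_nonneg[OF Ane])
  have Fn: "F < real n + 1" unfolding n_def using F0 by linarith
  have dehnF: "dehn X R F = real Dn" unfolding Dn_def n_def dehn_def by simp
  have key: "\<exists>\<delta> E. (\<delta>, E) \<in> admissible_pairs X R x \<and> set_norm E / \<delta> < F + \<eta> \<and> (\<forall>r\<in>E. area X R r \<le> Dn)"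
    if "0 < \<eta>" for \<eta>
  proof -
    define \<eta>' where "\<eta>' = min \<eta> (real n + 1 - F)"
    have "0 < \<eta>'" using that Fn by (simp add: \<eta>'_def)
    then obtain \<delta> E where p: "(\<delta>, E) \<in> admissible_pairs X R x" and lt: "set_norm E / \<delta> < F + \<eta>'"
      using F_lessD[OF Ane, of "F + \<eta>'"] unfolding F_def by auto
    note a = adm_good[OF p]
    have "area X R r \<le> Dn" if rE: "r \<in> E" for r
    proof -
      have "real (length r) \<le> set_norm E" by (rule len_le_norm[OF a(3) rE])
      also have "\<dots> \<le> set_norm E / \<delta>"
      proof -
        have "0 \<le> set_norm E" by (simp add: set_norm_def sum_nonneg)
        then have "set_norm E * \<delta> \<le> set_norm E" using a(1) a(2) by (simp add: mult_left_le)
        then show ?thesis using a(1) by (simp add: le_divide_eq)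
      qed
      also have "\<dots> < real n + 1" using lt by (simp add: \<eta>'_def)
      finally have "length r \<le> n" by linarith
      then show ?thesis unfolding Dn_def using area_le_dehn[OF fX] a(4) a(6) rE by blast
    qed
    moreover have "set_norm E / \<delta> < F + \<eta>" using lt by (simp add: \<eta>'_def)
    ultimately show ?thesis using p by blast
  qed
  have H0: "0 \<le> H_fun X R x"
  proof -
    obtain \<delta> E where "(\<delta>, E) \<in> admissible_pairs X R x" using Ane by auto
    then obtain \<delta>' where "0 < \<delta>'" "good_pair X R \<delta>' R (1 / x)" using S_nonempty[OF RX] by blast
    then show ?thesis by (rule H_nonneg)
  qed
  show ?thesis
  proof (cases "Dn = 0")
    case True
    obtain \<delta> E where "(\<delta>, E) \<in> admissible_pairs X R x" "\<forall>r\<in>E. area X R r \<le> Dn" using key[of 1] by auto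
    then have "H_fun X R x = 0" using all_good_if_area0[OF RX] True by auto
    then show ?thesis using F0 dehnF F_def by simp
  next
    case False
    have "H_fun X R x \<le> real Dn * F + e" if e0: "0 < e" for e
    proof -
      have Dpos: "0 < real Dn" using False by simp
      obtain \<delta> E where p: "(\<delta>, E) \<in> admissible_pairs X R x" and lt: "set_norm E / \<delta> < F + e / real Dn"
        and ar: "\<forall>r\<in>E. area X R r \<le> Dn" using key[of "e / real Dn"] e0 Dpos by auto
      note a = adm_good[OF p]
      show ?thesis
      proof (cases "set_norm E = 0")
        case True
        have "area X R r \<le> 0" if "r \<in> E" for r
        proof -
          have "real (length r) \<le> 0" using len_le_norm[OF a(3) that] True by simp
          then have "r = []" by simp
          then show ?thesis by (simp add: area_Nil)
        qed
        then have "H_fun X R x = 0" using all_good_if_area0[OF RX p] by blast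
        then show ?thesis using F0 e0 by simp
      next
        case False
        have N1: "1 \<le> set_norm E"
        proof -
          have "(\<Sum>r\<in>E. length r) \<noteq> 0"
          proof
            assume "(\<Sum>r\<in>E. length r) = 0"
            then show False using False by (simp only: set_norm_def of_nat_0)
          qed
          then have "1 \<le> (\<Sum>r\<in>E. length r)" by simp
          then have "real 1 \<le> real (\<Sum>r\<in>E. length r)" by (simp only: of_nat_le_iff)
          then show ?thesis by (simp only: set_norm_def of_nat_1)
        qed
        have g: "good_pair X R (\<delta> / real Dn) R (1 / x)"
          by (rule goodR[OF RX a(5) a(4)]) (use ar a(1) Dpos in auto)
        have "H_fun X R x \<le> 1 / (\<delta> / real Dn)" by (rule H_le) (use g a(1) Dpos in auto)
        also have "\<dots> = real Dn * (1 / \<delta>)" by simp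
        also have "\<dots> \<le> real Dn * (set_norm E / \<delta>)"
          using N1 a(1) Dpos by (intro mult_left_mono divide_right_mono) auto
        also have "\<dots> \<le> real Dn * (F + e / real Dn)" using lt Dpos by (intro mult_left_mono) auto
        also have "\<dots> = real Dn * F + e" using Dpos by (simp add: field_simps)
        finally show ?thesis .
      qed
    qed
    then have "H_fun X R x \<le> real Dn * F" by (rule field_le_epsilon) auto
    then show ?thesis using dehnF F_def by (simp add: mult.commute)
  qed
qed


lemma lower:
  assumes RX: "R \<subseteq> words X" and RK: "R \<subseteq> kernel X R" and fR: "finite R" and Rred: "\<forall>r\<in>R. reduced r"
    and Ane: "admissible_pairs X R x \<noteq> {}"
  shows "(1 / set_norm R) * F_fun X R x \<le> H_fun X R x"
proof -
  obtain \<delta>0 E0 where p0: "(\<delta>0, E0) \<in> admissible_pairs X R x" using Ane by auto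
  obtain \<delta>1 where d1: "0 < \<delta>1" "good_pair X R \<delta>1 R (1 / x)" using S_nonempty[OF RX p0] by blast
  have N0: "0 \<le> set_norm R" by (simp add: set_norm_def sum_nonneg)
  show ?thesis
  proof (cases "set_norm R = 0")
    case True
    then show ?thesis using H_nonneg[OF d1] by simp
  next
    case False
    then have Npos: "0 < set_norm R" using N0 by simp
    show ?thesis
    proof (rule H_ge[OF d1])
      fix \<delta> :: real assume dpos: "0 < \<delta>" and g: "good_pair X R \<delta> R (1 / x)"
      have "F_fun X R x \<le> set_norm R / \<delta>"
      proof (cases "\<delta> \<le> 1")
        case True
        then have "(\<delta>, R) \<in> admissible_pairs X R x" using dpos fR RK Rred g by (simp add: admissible_pairs_def)
        then show ?thesis by (rule F_le)
      next
        case False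
        have "good_pair X R 1 {} (1 / x)" unfolding good_pair_def
        proof (intro allI impI)
          fix \<Omega> :: "nat set" and \<rho>
          assume fin: "finite \<Omega>" and hom: "is_hom X \<Omega> \<rho>"
          have "almost_solution \<Omega> \<delta> R \<rho>" unfolding almost_solution_def
            using dOmega_le1[OF fin] False by (meson not_le order.strict_trans1)
          then show "\<exists>\<phi>. is_hom X \<Omega> \<phi> \<and> is_solution \<Omega> (kernel X R) \<phi> \<and> eps_close X \<Omega> (1 / x) \<rho> \<phi>"
            using g fin hom unfolding good_pair_def by blast
        qed
        then have "(1, {}) \<in> admissible_pairs X R x" by (simp add: admissible_pairs_def)
        then have "F_fun X R x \<le> 0" using F_le[of 1 "{}" X R x] by (simp add: set_norm_def)
        also have "\<dots> \<le> set_norm R / \<delta>" using N0 dpos by simp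
        finally show ?thesis .
      qed
      then show "1 / set_norm R * F_fun X R x \<le> 1 / \<delta>"
        using Npos dpos by (simp add: field_simps)
    qed
  qed
qed

lemma iso_zero:
  assumes iso: "pi_iso X R" and xpos: "0 < x" shows "H_fun X R x = 0"
proof (rule H_zero)
  fix \<delta> :: real assume "0 < \<delta>"
  show "good_pair X R \<delta> R (1 / x)" unfolding good_pair_def
  proof (intro allI impI)
    fix \<Omega> :: "nat set" and \<rho>
    assume fin: "finite \<Omega>" and hom: "is_hom X \<Omega> \<rho>"
    have sol: "is_solution \<Omega> (kernel X R) \<rho>" unfolding is_solution_def
    proof (intro ballI)
      fix r \<omega> assume rK: "r \<in> kernel X R" and "\<omega> \<in> \<Omega>"
      have "eval_word \<rho> r = eval_word (extg X \<rho>) r" using extg_eval[OF kernel_words[OF rK]] by simp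
      also have "\<dots> = eval_word (extg X \<rho>) []"
      proof -
        have "free_eq r []" using iso rK by (simp add: pi_iso_def)
        then show ?thesis by (rule free_eq_eval[of "extg X \<rho>" r "[]", OF extg_bij[OF hom]])
      qed
      finally show "eval_word \<rho> r \<omega> = \<omega>" by simp
    qed
    have "eps_close X \<Omega> (1 / x) \<rho> \<rho>" using xpos by (simp add: eps_close_def dOmega_def)
    then show "\<exists>\<phi>. is_hom X \<Omega> \<phi> \<and> is_solution \<Omega> (kernel X R) \<phi> \<and> eps_close X \<Omega> (1 / x) \<rho> \<phi>"
      using hom sol by blast
  qed
qed


theorem proposition2p9:
  fixes X :: "'a set" and R :: "'a word set"
  assumes "finite X" and "finite R"
    and "\<forall>r\<in>R. r \<in> words X \<and> reduced r"
    and "stable X R"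
  shows "(\<not> pi_iso X R \<longrightarrow> (\<forall>x::real. x \<ge> 1 \<longrightarrow>
            (1 / set_norm R) * F_fun X R x \<le> H_fun X R x \<and>
            H_fun X R x \<le> F_fun X R x * dehn X R (F_fun X R x))) \<and>
         (pi_iso X R \<longrightarrow> (\<forall>x::real. x \<ge> 1 \<longrightarrow> H_fun X R x = 0))"
proof -
  have RX: "R \<subseteq> words X" using assms(3) by auto
  have RK: "R \<subseteq> kernel X R" using R_kernel[of _ X R] RX by blast
  have Rred: "\<forall>r\<in>R. reduced r" using assms(3) by auto
  have Ane: "admissible_pairs X R x \<noteq> {}" if "x \<ge> 1" for x :: real
    using assms(4) that unfolding stable_def by auto
  show ?thesis
    using lower[OF RX RK assms(2) Rred Ane] upper[OF assms(1) RX Ane] iso_zero[of X R] by fastforce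
qed

end
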